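(* Let $\mathcal{M}=(\mathcal{S},\mathcal{A},\mathcal{P},r,p_0)$ be an infinite-horizon MDP as in the context, $D\in\mathbb{N}$, $\gamma_0,\dots,\gamma_D\in(0,1)$, and $\pi$ a stationary policy. For $d\le D$ let $V_d^\pi(s):=\mathbb{E}_\pi\big[\sum_{t=0}^\infty\Phi_d(t)r(s_t,a_t)\mid s_0=s\big]$. Then for every state $s\in\mathcal{S}$, $$V_D^\pi(s)=\mathbb{E}_{a\sim\pi(s),\,s'\sim\mathcal{P}(s,a)}\Big[r(s,a)+\sum_{d=0}^D\gamma_d\,V_d^\pi(s')\Big].$$
   Context: $\mathcal{S}\subseteq\mathbb{R}^{k}$, $\mathcal{A}\subseteq\mathbb{R}^{k'}$ finite or compact, $\mathcal{P}:\mathcal{S}\times\mathcal{A}\to\Delta(\mathcal{S})$ a transition kernel, $r:\mathcal{S}\times\mathcal{A}\to\mathbb{R}$ a continuous reward. $\mathbb{E}_\pi$ is the expectation over trajectories with $a_t\sim\pi(s_t)$, $s_{t+1}\sim\mathcal{P}(s_t,a_t)$. For $d\le D$, $$\Phi_d(t):=\sum_{\substack{(a_0,\dots,a_d)\in\mathbb{N}^{d+1}\\ a_0+\dots+a_d=t}}\ \prod_{i=0}^{d}\gamma_i^{a_i}.$$ *)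

theory Defs
  imports "HOL-Probability.Probability"
begin

text \<open>Discount weight Phi_d(t): sum over (a_0,...,a_d) in N^(d+1) with a_0+...+a_d = t
  of prod_i gamma_i^(a_i). Tuples are encoded as functions nat => nat vanishing above d.\<close>
definition Phi :: "(nat \<Rightarrow> real) \<Rightarrow> nat \<Rightarrow> nat \<Rightarrow> real" where
  "Phi \<gamma> d t =
     (\<Sum>f \<in> {f :: nat \<Rightarrow> nat. (\<forall>i. d < i \<longrightarrow> f i = 0) \<and> (\<Sum>i\<le>d. f i) = t}.
        \<Prod>i\<le>d. \<gamma> i ^ f i)"

primrec state_dist ::
  "'s measure \<Rightarrow> ('s \<Rightarrow> 'a measure) \<Rightarrow> ('s \<times> 'a \<Rightarrow> 's measure) \<Rightarrow> 's \<Rightarrow> nat \<Rightarrow> 's measure" where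
  "state_dist \<M> \<pi> P s 0 = return \<M> s"
| "state_dist \<M> \<pi> P s (Suc t) = bind (state_dist \<M> \<pi> P s t) (\<lambda>x. bind (\<pi> x) (\<lambda>a. P (x, a)))"

definition exp_reward ::
  "'s measure \<Rightarrow> ('s \<Rightarrow> 'a measure) \<Rightarrow> ('s \<times> 'a \<Rightarrow> 's measure) \<Rightarrow> ('s \<times> 'a \<Rightarrow> real)
     \<Rightarrow> 's \<Rightarrow> nat \<Rightarrow> real" where
  "exp_reward \<M> \<pi> P r s t = (\<integral>x. (\<integral>a. r (x, a) \<partial>\<pi> x) \<partial>state_dist \<M> \<pi> P s t)"

text \<open>V_d^pi(s) = E_pi[ sum_t Phi_d(t) r(s_t,a_t) | s_0 = s ]
  (by linearity, written as sum_t Phi_d(t) E_pi[r(s_t,a_t) | s_0 = s]; rewards bounded).\<close>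
definition value_fn ::
  "'s measure \<Rightarrow> ('s \<Rightarrow> 'a measure) \<Rightarrow> ('s \<times> 'a \<Rightarrow> 's measure) \<Rightarrow> ('s \<times> 'a \<Rightarrow> real)
     \<Rightarrow> (nat \<Rightarrow> real) \<Rightarrow> nat \<Rightarrow> 's \<Rightarrow> real" where
  "value_fn \<M> \<pi> P r \<gamma> d s = (\<Sum>t. Phi \<gamma> d t * exp_reward \<M> \<pi> P r s t)"

end

theory Submission
  imports Defs
begin


definition FF :: "nat \<Rightarrow> nat \<Rightarrow> (nat \<Rightarrow> nat) set" where
  "FF d t = {f :: nat \<Rightarrow> nat. (\<forall>i. d < i \<longrightarrow> f i = 0) \<and> (\<Sum>i\<le>d. f i) = t}"

lemma Phi_FF: "Phi \<gamma> d t = (\<Sum>f\<in>FF d t. \<Prod>i\<le>d. \<gamma> i ^ f i)"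
  unfolding Phi_def FF_def ..

lemma FF_finite: "finite (FF d t)"
proof -
  have "FF d t \<subseteq> {f. \<forall>x. (x \<in> {..d} \<longrightarrow> f x \<in> {..t}) \<and> (x \<notin> {..d} \<longrightarrow> f x = 0)}"
  proof
    fix f assume f: "f \<in> FF d t"
    { fix x assume "x \<le> d"
      then have "f x \<le> (\<Sum>i\<le>d. f i)" by (intro member_le_sum) auto
      then have "f x \<le> t" using f by (simp add: FF_def) }
    then show "f \<in> {f. \<forall>x. (x \<in> {..d} \<longrightarrow> f x \<in> {..t}) \<and> (x \<notin> {..d} \<longrightarrow> f x = 0)}"
      using f by (auto simp: FF_def not_le)
  qed
  then show ?thesis by (rule finite_subset) (intro finite_set_of_finite_funs; simp)
qed

lemma FF_0: "FF 0 t = {(\<lambda>i. 0)(0 := t)}"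
  by (auto simp: FF_def fun_eq_iff)

lemma Phi_0: "Phi \<gamma> 0 t = \<gamma> 0 ^ t"
  by (simp add: Phi_FF FF_0)

lemma FF_slice:
  assumes "j \<le> t"
  shows "{f \<in> FF (Suc d) t. f (Suc d) = j} = (\<lambda>g. g(Suc d := j)) ` FF d (t - j)"
proof (intro equalityI subsetI)
  fix f assume f: "f \<in> {f \<in> FF (Suc d) t. f (Suc d) = j}"
  let ?g = "f(Suc d := 0)"
  have "(\<Sum>i\<le>Suc d. f i) = t" "f (Suc d) = j" "\<forall>i. Suc d < i \<longrightarrow> f i = 0" using f by (auto simp: FF_def)
  then have "(\<Sum>i\<le>d. f i) = t - j" by simp
  moreover have "(\<Sum>i\<le>d. ?g i) = (\<Sum>i\<le>d. f i)" by (intro sum.cong) auto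
  ultimately have "?g \<in> FF d (t - j)" using \<open>\<forall>i. Suc d < i \<longrightarrow> f i = 0\<close>
    by (auto simp: FF_def)
  moreover have "f = ?g(Suc d := j)" using \<open>f (Suc d) = j\<close> by (auto simp: fun_eq_iff)
  ultimately show "f \<in> (\<lambda>g. g(Suc d := j)) ` FF d (t - j)" by blast
next
  fix f assume "f \<in> (\<lambda>g. g(Suc d := j)) ` FF d (t - j)"
  then obtain g where g: "g \<in> FF d (t - j)" and fg: "f = g(Suc d := j)" by blast
  have "(\<Sum>i\<le>d. f i) = (\<Sum>i\<le>d. g i)" unfolding fg by (intro sum.cong) auto
  then show "f \<in> {f \<in> FF (Suc d) t. f (Suc d) = j}"
    using g assms by (auto simp: FF_def fg)
qed

lemma Phi_Suc: "Phi \<gamma> (Suc d) t = (\<Sum>j\<le>t. Phi \<gamma> d (t - j) * \<gamma> (Suc d) ^ j)"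
proof -
  have img: "(\<lambda>f. f (Suc d)) ` FF (Suc d) t \<subseteq> {..t}"
  proof
    fix x assume "x \<in> (\<lambda>f. f (Suc d)) ` FF (Suc d) t"
    then obtain f where f: "f \<in> FF (Suc d) t" "x = f (Suc d)" by blast
    have "f (Suc d) \<le> (\<Sum>i\<le>Suc d. f i)" by (intro member_le_sum) auto
    then show "x \<in> {..t}" using f by (auto simp: FF_def)
  qed
  have "Phi \<gamma> (Suc d) t = (\<Sum>j\<le>t. \<Sum>f\<in>{f \<in> FF (Suc d) t. f (Suc d) = j}. \<Prod>i\<le>Suc d. \<gamma> i ^ f i)"
    unfolding Phi_FF by (rule sum.group[symmetric, OF FF_finite _ img]) simp
  also have "\<dots> = (\<Sum>j\<le>t. Phi \<gamma> d (t - j) * \<gamma> (Suc d) ^ j)"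
  proof (rule sum.cong[OF refl])
    fix j assume j: "j \<in> {..t}"
    have inj: "inj_on (\<lambda>g. g(Suc d := j)) (FF d (t - j))"
    proof (rule inj_onI)
      fix g h assume "g \<in> FF d (t - j)" "h \<in> FF d (t - j)" "g(Suc d := j) = h(Suc d := j)"
      then show "g = h" by (auto simp: FF_def fun_eq_iff) (metis lessI)
    qed
    have "(\<Sum>f\<in>{f \<in> FF (Suc d) t. f (Suc d) = j}. \<Prod>i\<le>Suc d. \<gamma> i ^ f i)
        = (\<Sum>g\<in>FF d (t - j). \<Prod>i\<le>Suc d. \<gamma> i ^ (g(Suc d := j)) i)"
      using j by (simp add: FF_slice sum.reindex[OF inj])
    also have "\<dots> = (\<Sum>g\<in>FF d (t - j). (\<Prod>i\<le>d. \<gamma> i ^ g i) * \<gamma> (Suc d) ^ j)"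
    proof (rule sum.cong[OF refl])
      fix g
      have "(\<Prod>i\<le>d. \<gamma> i ^ (g(Suc d := j)) i) = (\<Prod>i\<le>d. \<gamma> i ^ g i)"
        by (intro prod.cong) auto
      then show "(\<Prod>i\<le>Suc d. \<gamma> i ^ (g(Suc d := j)) i) = (\<Prod>i\<le>d. \<gamma> i ^ g i) * \<gamma> (Suc d) ^ j"
        by simp
    qed
    also have "\<dots> = Phi \<gamma> d (t - j) * \<gamma> (Suc d) ^ j"
      by (simp add: Phi_FF sum_distrib_right)
    finally show "(\<Sum>f\<in>{f \<in> FF (Suc d) t. f (Suc d) = j}. \<Prod>i\<le>Suc d. \<gamma> i ^ f i) = Phi \<gamma> d (t - j) * \<gamma> (Suc d) ^ j" .
  qed
  finally show ?thesis .
qed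

lemma Phi_zero: "Phi \<gamma> D 0 = 1"
  by (induction D) (simp_all add: Phi_0 Phi_Suc)

lemma Phi_rec: "Phi \<gamma> (Suc d) (Suc t) = Phi \<gamma> d (Suc t) + \<gamma> (Suc d) * Phi \<gamma> (Suc d) t"
  unfolding Phi_Suc[of \<gamma> d "Suc t"] Phi_Suc[of \<gamma> d t]
  by (simp add: sum.atMost_Suc_shift sum_distrib_left mult_ac del: sum.atMost_Suc)

lemma Phi_step: "Phi \<gamma> D (Suc t) = (\<Sum>d\<le>D. \<gamma> d * Phi \<gamma> d t)"
  by (induction D) (simp_all add: Phi_0 Phi_rec)

lemma Phi_nonneg: "(\<And>i. i \<le> d \<Longrightarrow> 0 \<le> \<gamma> i) \<Longrightarrow> 0 \<le> Phi \<gamma> d t"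
  unfolding Phi_def by (intro sum_nonneg prod_nonneg) auto

lemma Phi_summable: "(\<And>i. i \<le> d \<Longrightarrow> 0 \<le> \<gamma> i \<and> \<gamma> i < 1) \<Longrightarrow> summable (Phi \<gamma> d)"
proof (induction d)
  case 0
  then show ?case by (simp add: Phi_0[abs_def] summable_geometric)
next
  case (Suc d)
  have a: "summable (\<lambda>k. norm (\<gamma> (Suc d) ^ k))"
    using Suc.prems[of "Suc d"] by (simp add: summable_geometric)
  have b: "summable (\<lambda>k. norm (Phi \<gamma> d k))"
    using Suc by (simp add: Phi_nonneg)
  have "summable (\<lambda>k. \<Sum>i\<le>k. \<gamma> (Suc d) ^ i * Phi \<gamma> d (k - i))"
    by (rule summable_Cauchy_product[OF a b])
  then show ?case by (simp add: Phi_Suc[abs_def] mult.commute)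
qed



lemma bnd_integrable:
  fixes f :: "_ \<Rightarrow> real"
  assumes "prob_space M" "f \<in> borel_measurable M" "\<And>x. x \<in> space M \<Longrightarrow> \<bar>f x\<bar> \<le> B"
  shows "integrable M f"
proof -
  interpret prob_space M by fact
  show ?thesis using assms(2,3) by (intro integrable_const_bound[where B=B]) auto
qed

lemma bnd_integral:
  fixes f :: "_ \<Rightarrow> real"
  assumes "prob_space M" "f \<in> borel_measurable M" "\<And>x. x \<in> space M \<Longrightarrow> \<bar>f x\<bar> \<le> B"
  shows "\<bar>integral\<^sup>L M f\<bar> \<le> B"
proof -
  interpret prob_space M by fact
  have "\<bar>integral\<^sup>L M f\<bar> \<le> (\<integral>x. \<bar>f x\<bar> \<partial>M)" by (rule integral_abs_bound)
  also have "\<dots> \<le> (\<integral>x. B \<partial>M)"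
    using assms by (intro integral_mono bnd_integrable[OF assms(1)]) auto
  also have "\<dots> = B" by (simp add: prob_space)
  finally show ?thesis .
qed


locale mdp =
  fixes SS :: "'s measure" and AA :: "'a measure" and \<pi> P
  assumes Pm: "P \<in> SS \<Otimes>\<^sub>M AA \<rightarrow>\<^sub>M prob_algebra SS"
    and \<pi>m: "\<pi> \<in> SS \<rightarrow>\<^sub>M prob_algebra AA"
begin

definition "KK x = bind (\<pi> x) (\<lambda>a. P (x, a))"

lemma KK_meas: "KK \<in> SS \<rightarrow>\<^sub>M prob_algebra SS"
proof -
  have "(\<lambda>(x, y). P (x, y)) \<in> SS \<Otimes>\<^sub>M AA \<rightarrow>\<^sub>M prob_algebra SS" using Pm by simp
  then have "(\<lambda>x. bind (\<pi> x) (\<lambda>a. P (x, a))) \<in> SS \<rightarrow>\<^sub>M prob_algebra SS"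
    by (rule measurable_bind_prob_space2[OF \<pi>m])
  then show ?thesis unfolding KK_def[abs_def] .
qed

lemma sd_Suc: "state_dist SS \<pi> P x (Suc t) = bind (state_dist SS \<pi> P x t) KK"
  by (simp add: KK_def[abs_def])

lemma sd_meas: "(\<lambda>x. state_dist SS \<pi> P x t) \<in> SS \<rightarrow>\<^sub>M prob_algebra SS"
proof (induction t)
  case 0
  then show ?case by simp
next
  case (Suc t)
  show ?case unfolding sd_Suc by (rule measurable_bind_prob_space[OF Suc KK_meas])
qed

lemma KK_space: "x \<in> space SS \<Longrightarrow> KK x \<in> space (prob_algebra SS)"
  using measurable_space[OF KK_meas] by blast

lemma KK_sets: "x \<in> space SS \<Longrightarrow> sets (KK x) = sets SS"
  using KK_space by (simp add: space_prob_algebra)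

lemma KK_prob: "x \<in> space SS \<Longrightarrow> prob_space (KK x)"
  using KK_space by (simp add: space_prob_algebra)

lemma sd_space: "x \<in> space SS \<Longrightarrow> state_dist SS \<pi> P x t \<in> space (prob_algebra SS)"
  using measurable_space[OF sd_meas] by blast

lemma sd_markov: "x \<in> space SS \<Longrightarrow> state_dist SS \<pi> P x (Suc t) = bind (KK x) (\<lambda>y. state_dist SS \<pi> P y t)"
proof (induction t arbitrary: x)
  case 0
  have "state_dist SS \<pi> P x (Suc 0) = KK x"
    unfolding sd_Suc using 0 by (simp add: bind_return[OF measurable_prob_algebraD[OF KK_meas]])
  also have "\<dots> = bind (KK x) (return SS)" using KK_sets[OF 0] by (simp add: bind_return'')
  finally show ?case by simp
next
  case (Suc t)
  have m: "(\<lambda>y. state_dist SS \<pi> P y t) \<in> KK x \<rightarrow>\<^sub>M subprob_algebra SS"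
    using measurable_prob_algebraD[OF sd_meas] by (subst measurable_cong_sets[OF KK_sets[OF Suc.prems] refl])
  have "state_dist SS \<pi> P x (Suc (Suc t)) = bind (bind (KK x) (\<lambda>y. state_dist SS \<pi> P y t)) KK"
    by (simp only: sd_Suc[of x "Suc t"] Suc.IH[OF Suc.prems])
  also have "\<dots> = bind (KK x) (\<lambda>y. bind (state_dist SS \<pi> P y t) KK)"
    by (rule bind_assoc[OF m measurable_prob_algebraD[OF KK_meas]])
  finally show ?case by (simp only: sd_Suc)
qed


end



context mdp begin

lemma KK_integral:
  fixes h :: "_ \<Rightarrow> real"
  assumes hm: "h \<in> borel_measurable SS" and hb: "\<And>y. y \<in> space SS \<Longrightarrow> \<bar>h y\<bar> \<le> C"
    and x: "x \<in> space SS"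
  shows "integral\<^sup>L (KK x) h = (\<integral>a. integral\<^sup>L (P (x, a)) h \<partial>\<pi> x)"
proof -
  have sx: "\<pi> x \<in> space (prob_algebra AA)" using measurable_space[OF \<pi>m x] .
  have N: "(\<lambda>a. P (x, a)) \<in> \<pi> x \<rightarrow>\<^sub>M subprob_algebra SS"
    using measurable_Pair2[OF measurable_prob_algebraD[OF Pm] x] sx
    by (subst measurable_cong_sets[of _ AA]) (auto simp: space_prob_algebra)
  have "prob_space (\<pi> x)" using sx by (simp add: space_prob_algebra)
  then show ?thesis unfolding KK_def
    by (intro integral_bind[OF hm hb N, where B'=1])
       (auto simp: prob_space.finite_measure intro!: AE_I2 subprob_space.subprob_emeasure_le_1
             dest!: measurable_space[OF N] simp: space_subprob_algebra)
qed

definition "RR r x = (\<integral>a. r (x, a) \<partial>\<pi> x)"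
definition "EE r t x = (\<integral>y. RR r y \<partial>state_dist SS \<pi> P x t)"

context
  fixes r :: "_ \<Rightarrow> real" and B
  assumes rm[measurable]: "r \<in> borel_measurable (SS \<Otimes>\<^sub>M AA)"
    and rb: "\<And>z. z \<in> space (SS \<Otimes>\<^sub>M AA) \<Longrightarrow> \<bar>r z\<bar> \<le> B"
begin

lemma RR_meas[measurable]: "RR r \<in> borel_measurable SS"
proof -
  have D: "(\<lambda>x. distr (\<pi> x) (SS \<Otimes>\<^sub>M AA) (Pair x)) \<in> SS \<rightarrow>\<^sub>M prob_algebra (SS \<Otimes>\<^sub>M AA)"
    by (rule measurable_distr_prob_space2[OF \<pi>m]) simp
  have "(\<lambda>x. integral\<^sup>L (distr (\<pi> x) (SS \<Otimes>\<^sub>M AA) (Pair x)) r) \<in> borel_measurable SS"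
    by (rule measurable_compose[OF measurable_prob_algebraD[OF D] integral_measurable_subprob_algebra[OF rm]])
  moreover have "integral\<^sup>L (distr (\<pi> x) (SS \<Otimes>\<^sub>M AA) (Pair x)) r = RR r x" if x: "x \<in> space SS" for x
  proof -
    have sx: "\<pi> x \<in> space (prob_algebra AA)" using measurable_space[OF \<pi>m x] .
    have "Pair x \<in> \<pi> x \<rightarrow>\<^sub>M SS \<Otimes>\<^sub>M AA"
      using sx x by (subst measurable_cong_sets[of _ AA]) (auto simp: space_prob_algebra)
    then show ?thesis unfolding RR_def by (subst integral_distr) auto
  qed
  ultimately show ?thesis by (subst measurable_cong[symmetric]) auto
qed

lemma RR_bnd: "x \<in> space SS \<Longrightarrow> \<bar>RR r x\<bar> \<le> B"
proof -
  assume x: "x \<in> space SS"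
  have sx: "\<pi> x \<in> space (prob_algebra AA)" using measurable_space[OF \<pi>m x] .
  then have sp: "space (\<pi> x) = space AA" by (intro sets_eq_imp_space_eq) (simp add: space_prob_algebra)
  have "(\<lambda>a. r (x, a)) \<in> borel_measurable AA" by (rule measurable_Pair2[OF rm x])
  moreover have "sets (\<pi> x) = sets AA" using sx by (simp add: space_prob_algebra)
  ultimately have "(\<lambda>a. r (x, a)) \<in> borel_measurable (\<pi> x)"
    by (simp cong: measurable_cong_sets)
  then show ?thesis unfolding RR_def
  proof (rule bnd_integral[rotated])
    show "prob_space (\<pi> x)" using sx by (simp add: space_prob_algebra)
    show "\<bar>r (x, a)\<bar> \<le> B" if "a \<in> space (\<pi> x)" for a
      using that x by (intro rb) (simp add: sp space_pair_measure)
  qed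
qed

lemma EE_meas[measurable]: "EE r t \<in> borel_measurable SS"
  unfolding EE_def[abs_def]
  by (rule measurable_compose[OF measurable_prob_algebraD[OF sd_meas] integral_measurable_subprob_algebra[OF RR_meas]])

lemma EE_bnd: "x \<in> space SS \<Longrightarrow> \<bar>EE r t x\<bar> \<le> B"
proof -
  assume x: "x \<in> space SS"
  have sx: "state_dist SS \<pi> P x t \<in> space (prob_algebra SS)" by (rule sd_space[OF x])
  then have sp: "space (state_dist SS \<pi> P x t) = space SS" by (intro sets_eq_imp_space_eq) (simp add: space_prob_algebra)
  have "RR r \<in> borel_measurable (state_dist SS \<pi> P x t)"
    using sx by (subst measurable_cong_sets[of _ SS]) (auto simp: space_prob_algebra)
  then show ?thesis unfolding EE_def
    using sx by (intro bnd_integral) (auto simp: space_prob_algebra sp intro!: RR_bnd)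
qed

lemma EE_0: "x \<in> space SS \<Longrightarrow> EE r 0 x = RR r x"
  unfolding EE_def by (simp add: integral_return)

lemma EE_Suc: "x \<in> space SS \<Longrightarrow> EE r (Suc t) x = (\<integral>y. EE r t y \<partial>KK x)"
proof -
  assume x: "x \<in> space SS"
  have N: "(\<lambda>y. state_dist SS \<pi> P y t) \<in> KK x \<rightarrow>\<^sub>M subprob_algebra SS"
    using measurable_prob_algebraD[OF sd_meas] by (subst measurable_cong_sets[OF KK_sets[OF x] refl])
  show ?thesis unfolding EE_def sd_markov[OF x]
    by (intro integral_bind[OF RR_meas RR_bnd N, where B'=1])
       (auto simp: prob_space.finite_measure KK_prob[OF x] intro!: AE_I2 subprob_space.subprob_emeasure_le_1
             dest!: measurable_space[OF N] simp: space_subprob_algebra)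
qed


lemma value_EE: "value_fn SS \<pi> P r \<gamma> d y = (\<Sum>t. Phi \<gamma> d t * EE r t y)"
  unfolding value_fn_def exp_reward_def EE_def RR_def ..

context
  fixes \<gamma> :: "nat \<Rightarrow> real" and D :: nat
  assumes \<gamma>r: "\<And>d. d \<le> D \<Longrightarrow> 0 < \<gamma> d \<and> \<gamma> d < 1"
begin

lemma Phi_summ: "d \<le> D \<Longrightarrow> summable (Phi \<gamma> d)"
  by (rule Phi_summable) (metis \<gamma>r le_trans less_imp_le)

lemma Phi_nn: "d \<le> D \<Longrightarrow> 0 \<le> Phi \<gamma> d t"
  by (rule Phi_nonneg) (metis \<gamma>r le_trans less_imp_le)

lemma VV_summ_norm:
  assumes d: "d \<le> D" and bnd: "\<And>t. \<bar>g t\<bar> \<le> B"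
  shows "summable (\<lambda>t. norm (Phi \<gamma> d t * g t))"
proof (rule summable_comparison_test)
  show "\<exists>N. \<forall>n\<ge>N. norm (norm (Phi \<gamma> d n * g n)) \<le> Phi \<gamma> d n * B"
    using Phi_nn[OF d] bnd by (auto simp: abs_mult intro!: mult_left_mono)
  show "summable (\<lambda>n. Phi \<gamma> d n * B)" by (intro summable_mult2 Phi_summ d)
qed

lemma VV_summ:
  assumes d: "d \<le> D" and bnd: "\<And>t. \<bar>g t\<bar> \<le> B"
  shows "summable (\<lambda>t. Phi \<gamma> d t * g t)"
  using VV_summ_norm[OF assms] by (rule summable_norm_cancel)

lemma VV_bnd:
  assumes d: "d \<le> D" and bnd: "\<And>t. \<bar>g t\<bar> \<le> B"
  shows "\<bar>\<Sum>t. Phi \<gamma> d t * g t\<bar> \<le> (\<Sum>t. Phi \<gamma> d t) * B"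
proof -
  have "\<bar>\<Sum>t. Phi \<gamma> d t * g t\<bar> \<le> (\<Sum>t. norm (Phi \<gamma> d t * g t))"
    using summable_norm[OF VV_summ_norm[OF assms]] by simp
  also have "\<dots> \<le> (\<Sum>t. Phi \<gamma> d t * B)"
    using Phi_nn[OF d] bnd
    by (intro suminf_le VV_summ_norm[OF assms] summable_mult2 Phi_summ d)
       (auto simp: abs_mult intro!: mult_left_mono)
  also have "\<dots> = (\<Sum>t. Phi \<gamma> d t) * B" by (rule suminf_mult2[symmetric]) (intro Phi_summ d)
  finally show ?thesis .
qed

definition "WW y = (\<Sum>d\<le>D. \<gamma> d * (\<Sum>t. Phi \<gamma> d t * EE r t y))"

lemma WW_meas[measurable]: "WW \<in> borel_measurable SS"
  unfolding WW_def[abs_def] by measurable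

lemma WW_bnd: "y \<in> space SS \<Longrightarrow> \<bar>WW y\<bar> \<le> (\<Sum>d\<le>D. \<bar>\<gamma> d\<bar> * ((\<Sum>t. Phi \<gamma> d t) * B))"
  unfolding WW_def
  by (rule order_trans[OF sum_abs]) (auto simp: abs_mult intro!: sum_mono mult_left_mono VV_bnd EE_bnd)

lemma main:
  assumes s: "s \<in> space SS"
  shows "value_fn SS \<pi> P r \<gamma> D s =
           (\<integral>a. (\<integral>s'. r (s, a) + (\<Sum>d\<le>D. \<gamma> d * value_fn SS \<pi> P r \<gamma> d s') \<partial>P (s, a)) \<partial>\<pi> s)"
proof -
  let ?E = "\<lambda>t y. EE r t y"
  have Eb: "\<And>t y. y \<in> space SS \<Longrightarrow> \<bar>EE r t y\<bar> \<le> B" by (rule EE_bnd)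
  have Ebs: "\<And>t. \<bar>EE r t s\<bar> \<le> B" using Eb[OF s] .
  have KKp: "prob_space (KK s)" by (rule KK_prob[OF s])
  have spK: "space (KK s) = space SS" using KK_sets[OF s] by (rule sets_eq_imp_space_eq)
  have mK: "h \<in> borel_measurable SS \<Longrightarrow> h \<in> borel_measurable (KK s)" for h :: "_ \<Rightarrow> real"
    using KK_sets[OF s] by (simp cong: measurable_cong_sets)
  have Eint: "integrable (KK s) (EE r t)" for t
    by (rule bnd_integrable[OF KKp mK[OF EE_meas]]) (auto simp: spK intro: Eb)
  have "value_fn SS \<pi> P r \<gamma> D s = (\<Sum>t. Phi \<gamma> D t * EE r t s)" by (rule value_EE)
  also have "\<dots> = Phi \<gamma> D 0 * EE r 0 s + (\<Sum>t. Phi \<gamma> D (Suc t) * EE r (Suc t) s)"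
    using suminf_split_head[OF VV_summ[where g="\<lambda>t. EE r t s", OF order.refl Ebs]] by simp
  also have "(\<Sum>t. Phi \<gamma> D (Suc t) * EE r (Suc t) s) = (\<Sum>t. \<Sum>d\<le>D. \<gamma> d * (Phi \<gamma> d t * EE r (Suc t) s))"
    by (simp add: Phi_step sum_distrib_left sum_distrib_right mult_ac)
  also have "\<dots> = (\<Sum>d\<le>D. \<Sum>t. \<gamma> d * (Phi \<gamma> d t * EE r (Suc t) s))"
    by (intro suminf_sum summable_mult VV_summ Ebs) simp
  also have "\<dots> = (\<Sum>d\<le>D. \<gamma> d * (\<Sum>t. Phi \<gamma> d t * EE r (Suc t) s))"
    by (intro sum.cong refl suminf_mult VV_summ[where g="\<lambda>t. EE r (Suc t) s"] Ebs) simp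
  also have "\<dots> = (\<Sum>d\<le>D. \<gamma> d * (\<integral>y. (\<Sum>t. Phi \<gamma> d t * EE r t y) \<partial>KK s))"
  proof (intro sum.cong refl arg_cong2[where f="(*)"])
    fix d assume d: "d \<in> {..D}"
    have "(\<integral>y. (\<Sum>t. Phi \<gamma> d t * EE r t y) \<partial>KK s) = (\<Sum>t. \<integral>y. Phi \<gamma> d t * EE r t y \<partial>KK s)"
    proof (rule integral_suminf)
      show "integrable (KK s) (\<lambda>y. Phi \<gamma> d t * EE r t y)" for t using Eint by simp
      show "AE y in KK s. summable (\<lambda>t. norm (Phi \<gamma> d t * EE r t y))"
        using d by (intro AE_I2 VV_summ_norm) (auto simp: spK intro: Eb)
      have "summable (\<lambda>t. Phi \<gamma> d t * \<bar>B\<bar>)" using d by (intro summable_mult2 Phi_summ) auto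
      then have "summable (\<lambda>t. norm (Phi \<gamma> d t * B))" using d by (simp add: abs_mult Phi_nn)
      then show "summable (\<lambda>t. \<integral>y. norm (Phi \<gamma> d t * EE r t y) \<partial>KK s)"
      proof (rule summable_comparison_test'[where N=0])
        fix t
        have mm: "(\<lambda>y. norm (Phi \<gamma> d t * EE r t y)) \<in> borel_measurable (KK s)"
          by (rule mK) measurable
        have "(\<integral>y. norm (Phi \<gamma> d t * EE r t y) \<partial>KK s) \<le> \<bar>Phi \<gamma> d t * B\<bar>"
          using d by (intro bnd_integral[OF KKp mm, THEN order_trans[OF abs_ge_self]])
             (auto simp: spK abs_mult Phi_nn intro!: mult_left_mono order_trans[OF Eb abs_ge_self])
        then show "norm (\<integral>y. norm (Phi \<gamma> d t * EE r t y) \<partial>KK s) \<le> norm (Phi \<gamma> d t * B)"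
          by (simp add: integral_nonneg_AE)
      qed
    qed
    also have "\<dots> = (\<Sum>t. Phi \<gamma> d t * EE r (Suc t) s)"
      by (simp add: EE_Suc[OF s])
    finally show "(\<Sum>t. Phi \<gamma> d t * EE r (Suc t) s) = (\<integral>y. (\<Sum>t. Phi \<gamma> d t * EE r t y) \<partial>KK s)" ..
  qed
  also have "Phi \<gamma> D 0 * EE r 0 s = RR r s" by (simp add: Phi_zero EE_0[OF s])
  also have "(\<Sum>d\<le>D. \<gamma> d * (\<integral>y. (\<Sum>t. Phi \<gamma> d t * EE r t y) \<partial>KK s)) = (\<integral>y. WW y \<partial>KK s)"
  proof -
    have "integrable (KK s) (\<lambda>y. \<gamma> d * (\<Sum>t. Phi \<gamma> d t * EE r t y))" if d: "d \<le> D" for d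
    proof (rule bnd_integrable[OF KKp])
      show "(\<lambda>y. \<gamma> d * (\<Sum>t. Phi \<gamma> d t * EE r t y)) \<in> borel_measurable (KK s)"
        by (rule mK) measurable
      show "\<bar>\<gamma> d * (\<Sum>t. Phi \<gamma> d t * EE r t y)\<bar> \<le> \<bar>\<gamma> d\<bar> * ((\<Sum>t. Phi \<gamma> d t) * B)"
        if "y \<in> space (KK s)" for y
        using that d by (auto simp: abs_mult spK intro!: mult_left_mono VV_bnd Eb)
    qed
    then have "(\<integral>y. WW y \<partial>KK s) = (\<Sum>d\<le>D. (\<integral>y. \<gamma> d * (\<Sum>t. Phi \<gamma> d t * EE r t y) \<partial>KK s))"
      unfolding WW_def by (intro Bochner_Integration.integral_sum) auto
    then show ?thesis by simp
  qed
  also have "(\<integral>y. WW y \<partial>KK s) = (\<integral>a. (\<integral>y. WW y \<partial>P (s, a)) \<partial>\<pi> s)"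
    by (rule KK_integral[OF WW_meas WW_bnd s])
  finally have L: "value_fn SS \<pi> P r \<gamma> D s = RR r s + (\<integral>a. (\<integral>y. WW y \<partial>P (s, a)) \<partial>\<pi> s)" .
  have s\<pi>: "\<pi> s \<in> space (prob_algebra AA)" using measurable_space[OF \<pi>m s] .
  have \<pi>p: "prob_space (\<pi> s)" and \<pi>sets: "sets (\<pi> s) = sets AA" using s\<pi> by (auto simp: space_prob_algebra)
  have sp\<pi>: "space (\<pi> s) = space AA" using \<pi>sets by (rule sets_eq_imp_space_eq)
  have Psa: "P (s, a) \<in> space (prob_algebra SS)" if "a \<in> space AA" for a
    using measurable_space[OF Pm, of "(s, a)"] that s by (simp add: space_pair_measure)
  have WWint: "integrable (P (s, a)) WW" if a: "a \<in> space AA" for a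
  proof -
    have "prob_space (P (s, a))" "sets (P (s, a)) = sets SS" using Psa[OF a] by (auto simp: space_prob_algebra)
    moreover from this(2) have "space (P (s, a)) = space SS" by (rule sets_eq_imp_space_eq)
    ultimately show ?thesis
      by (intro bnd_integrable[where B="(\<Sum>d\<le>D. \<bar>\<gamma> d\<bar> * ((\<Sum>t. Phi \<gamma> d t) * B))"])
         (auto cong: measurable_cong_sets intro!: WW_bnd)
  qed
  have Pprob: "prob_space (P (s, a))" if a: "a \<in> space AA" for a
    using Psa[OF a] by (auto simp: space_prob_algebra)
  have inner: "(\<integral>s'. r (s, a) + (\<Sum>d\<le>D. \<gamma> d * value_fn SS \<pi> P r \<gamma> d s') \<partial>P (s, a))
      = r (s, a) + (\<integral>y. WW y \<partial>P (s, a))" if a: "a \<in> space AA" for a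
  proof -
    have "(\<integral>s'. r (s, a) + (\<Sum>d\<le>D. \<gamma> d * value_fn SS \<pi> P r \<gamma> d s') \<partial>P (s, a))
        = (\<integral>s'. r (s, a) + WW s' \<partial>P (s, a))"
      by (simp add: value_EE WW_def)
    also have "\<dots> = r (s, a) + (\<integral>y. WW y \<partial>P (s, a))"
    proof -
      interpret Pa: prob_space "P (s, a)" by (rule Pprob[OF a])
      show ?thesis using WWint[OF a] by (simp add: Bochner_Integration.integral_add Pa.prob_space)
    qed
    finally show ?thesis .
  qed
  have rm1: "(\<lambda>a. r (s, a)) \<in> borel_measurable (\<pi> s)"
    using measurable_Pair2[OF rm s] \<pi>sets by (simp cong: measurable_cong_sets)
  have rint: "integrable (\<pi> s) (\<lambda>a. r (s, a))"
    by (rule bnd_integrable[OF \<pi>p rm1]) (auto simp: sp\<pi> space_pair_measure s intro!: rb)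
  have Wm: "(\<lambda>a. \<integral>y. WW y \<partial>P (s, a)) \<in> borel_measurable (\<pi> s)"
  proof -
    have "(\<lambda>a. P (s, a)) \<in> AA \<rightarrow>\<^sub>M subprob_algebra SS"
      by (rule measurable_Pair2[OF measurable_prob_algebraD[OF Pm] s])
    then have "(\<lambda>a. \<integral>y. WW y \<partial>P (s, a)) \<in> borel_measurable AA"
      by (rule measurable_compose[OF _ integral_measurable_subprob_algebra[OF WW_meas]])
    then show ?thesis using \<pi>sets by (simp cong: measurable_cong_sets)
  qed
  have Wint: "integrable (\<pi> s) (\<lambda>a. \<integral>y. WW y \<partial>P (s, a))"
  proof (rule bnd_integrable[OF \<pi>p Wm])
    fix a assume "a \<in> space (\<pi> s)"
    then have a: "a \<in> space AA" by (simp add: sp\<pi>)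
    have "sets (P (s, a)) = sets SS" using Psa[OF a] by (auto simp: space_prob_algebra)
    moreover from this have "space (P (s, a)) = space SS" by (rule sets_eq_imp_space_eq)
    ultimately show "\<bar>\<integral>y. WW y \<partial>P (s, a)\<bar> \<le> (\<Sum>d\<le>D. \<bar>\<gamma> d\<bar> * ((\<Sum>t. Phi \<gamma> d t) * B))"
      using Pprob[OF a] by (intro bnd_integral) (auto cong: measurable_cong_sets intro!: WW_bnd)
  qed
  have "(\<integral>a. (\<integral>s'. r (s, a) + (\<Sum>d\<le>D. \<gamma> d * value_fn SS \<pi> P r \<gamma> d s') \<partial>P (s, a)) \<partial>\<pi> s)
      = (\<integral>a. r (s, a) + (\<integral>y. WW y \<partial>P (s, a)) \<partial>\<pi> s)"
    by (rule Bochner_Integration.integral_cong[OF refl inner]) (simp add: sp\<pi>)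
  also have "\<dots> = RR r s + (\<integral>a. (\<integral>y. WW y \<partial>P (s, a)) \<partial>\<pi> s)"
    unfolding RR_def by (rule Bochner_Integration.integral_add[OF rint Wint])
  finally show ?thesis using L by simp
qed

end

end

end

theorem proposition3:
  fixes S :: "(real ^ 'k) set" and A :: "(real ^ 'm) set"
    and P :: "(real ^ 'k) \<times> (real ^ 'm) \<Rightarrow> (real ^ 'k) measure"
    and r :: "(real ^ 'k) \<times> (real ^ 'm) \<Rightarrow> real"
    and \<pi> :: "real ^ 'k \<Rightarrow> (real ^ 'm) measure"
    and \<gamma> :: "nat \<Rightarrow> real" and D :: nat and s :: "real ^ 'k"
  assumes A_fin_cpt: "finite A \<or> compact A"
    and P_kernel: "P \<in> restrict_space borel S \<Otimes>\<^sub>M restrict_space borel A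
                        \<rightarrow>\<^sub>M prob_algebra (restrict_space borel S)"
    and r_cont: "continuous_on (S \<times> A) r"
    and r_bounded: "\<exists>B. \<forall>x\<in>S. \<forall>a\<in>A. \<bar>r (x, a)\<bar> \<le> B"
    and \<pi>_policy: "\<pi> \<in> restrict_space borel S \<rightarrow>\<^sub>M prob_algebra (restrict_space borel A)"
    and \<gamma>_range: "\<And>d. d \<le> D \<Longrightarrow> 0 < \<gamma> d \<and> \<gamma> d < 1"
    and s_in: "s \<in> S"
  shows "value_fn (restrict_space borel S) \<pi> P r \<gamma> D s =
           (\<integral>a. (\<integral>s'. r (s, a) + (\<Sum>d\<le>D. \<gamma> d * value_fn (restrict_space borel S) \<pi> P r \<gamma> d s')
                    \<partial>P (s, a)) \<partial>\<pi> s)"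
  proof -
  let ?SS = "restrict_space borel S" and ?AA = "restrict_space borel A"
  interpret mdp ?SS ?AA \<pi> P using P_kernel \<pi>_policy by unfold_locales
  obtain B where B: "\<And>x a. x \<in> S \<Longrightarrow> a \<in> A \<Longrightarrow> \<bar>r (x, a)\<bar> \<le> B" using r_bounded by blast
  have id_m: "(\<lambda>z. z) \<in> ?SS \<Otimes>\<^sub>M ?AA \<rightarrow>\<^sub>M restrict_space borel (S \<times> A)"
  proof (rule measurable_restrict_space2)
    show "(\<lambda>z. z) \<in> space (?SS \<Otimes>\<^sub>M ?AA) \<rightarrow> S \<times> A"
      by (auto simp: space_pair_measure space_restrict_space)
    have f: "fst \<in> ?SS \<Otimes>\<^sub>M ?AA \<rightarrow>\<^sub>M borel"
      by (rule measurable_compose[OF measurable_fst measurable_restrict_space1]) simp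
    have g: "snd \<in> ?SS \<Otimes>\<^sub>M ?AA \<rightarrow>\<^sub>M borel"
      by (rule measurable_compose[OF measurable_snd measurable_restrict_space1]) simp
    have "(\<lambda>z. (fst z, snd z)) \<in> ?SS \<Otimes>\<^sub>M ?AA \<rightarrow>\<^sub>M borel \<Otimes>\<^sub>M borel"
      by (rule measurable_Pair[OF f g])
    then show "(\<lambda>z. z) \<in> ?SS \<Otimes>\<^sub>M ?AA \<rightarrow>\<^sub>M borel" by (simp add: borel_prod)
  qed
  have rm: "r \<in> borel_measurable (?SS \<Otimes>\<^sub>M ?AA)"
    using measurable_compose[OF id_m borel_measurable_continuous_on_restrict[OF r_cont]] by simp
  have rb: "\<bar>r z\<bar> \<le> B" if "z \<in> space (?SS \<Otimes>\<^sub>M ?AA)" for z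
    using that B by (auto simp: space_pair_measure space_restrict_space)
  have s: "s \<in> space ?SS" using s_in by (simp add: space_restrict_space)
  show ?thesis
    by (rule main[OF rm rb _ s]) (use \<gamma>_range in auto)
qed

end
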